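(* Let $f$ be a strategy-proof SCF and $G$ a gradual mechanism implementing $f$. If $G$ is indifference reaction-proof, then $G$ is incentive compatible.
   Context: Setting. $N$ finite set of agents, $X$ finite set of outcomes, finite type spaces $\Theta_i$, each type $\theta_i$ inducing a complete transitive preference $R(\theta_i)$ on $X$; $\Theta=\prod_i\Theta_i$. An SCF $f:\Theta\to X$ is strategy-proof if $f(\theta_i,\theta_{-i})\,R(\theta_i)\,f(\theta_i',\theta_{-i})$ for all $i,\theta_i,\theta_i',\theta_{-i}$. Dynamic game forms. A dynamic game form with perfect recall consists of a finite tree $\bar H$ of histories (finite sequences of action profiles) containing the empty initial history $\varnothing$, closed under prefixes ($\preceq$ prefix order, $\prec$ strict); terminal histories $Z$, non-terminal $H$; at each $h\in H$ a nonempty set $\mathbb P(h)$ of agents move simultaneously with available actions $A_i(h)$, all action profiles leading to successors; $\mathbb P(\varnothing)=N$; each agent's decision nodes $H_i$ are partitioned into information sets $\boldsymbol H_i$, with available actions constant on information sets and perfect recall; $\mathcal X:Z\to X$. For information sets of $i$, $\boldsymbol h_i\prec\bar{\boldsymbol h}_i$ if $h\prec\bar h$ for some $h\in\boldsymbol h_i,\bar h\in\bar{\boldsymbol h}_i$; $\bar{\boldsymbol h}_i$ is an immediate successor of $\boldsymbol h_i$ if $\boldsymbol h_i\prec\bar{\boldsymbol h}_i$ and no information set of $i$ lies strictly between them. Strategies choose an available action at each information set; $s_M$ denotes a profile for agents in $M$ ($s_{-i}$, $s_{-i,j}$ for agents other than $i$, other than $i,j$); a complete profile $s$ determines $z(s)$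 and $\mathcal X(s)=\mathcal X(z(s))$. Gradual mechanisms. A GM implementing $f$ is such a game form in which (1) actions of $i$ are nonempty subsets of $\Theta_i$; (2) at every $h\in H_i$ the available actions of $i$ are pairwise disjoint with union $\Theta_i(h)$, where for any history $h$, $\Theta_i(h)$ is the last action of $i$ in $h$ ($\Theta_i$ if $i$ has not acted); (3) $\mathcal X(z)=f(\theta)$ for all $z\in Z$, $\theta\in\Theta(z)=\prod_i\Theta_i(z)$. For a history $h$, $\Theta(h)=\prod_i\Theta_i(h)$; for an information set, $\Theta_i(\boldsymbol h_i)=\Theta_i(h)$ for $h\in\boldsymbol h_i$. Consistency. A history $h$ is consistent with $s_M$ ($M\subsetneq N$) if $h\preceq z(s_M,s_{N\setminus M})$ for some $s_{N\setminus M}$. Incentive compatibility. $s_i$ is unconditional for $\theta_i$ if $\theta_i\in s_i(h)$ for every $h\in H_i$ with $\theta_i\in\Theta_i(h)$ (denoted $s_{\theta_i}$). The GM is incentive compatible if $\mathcal X(s_{\theta_i},s_{-i})\,R(\theta_i)\,\mathcal X(s_i,s_{-i})$ for all $i,\theta_i$, unconditional $s_{\theta_i}$, $s_i$, $s_{-i}$. Indifference reaction-proofness. A GM $G$ implementing $f$ is indifference reaction-proof if for any two distinct agents $i,j\in N$, any pair of distinct information sets $\boldsymbol h_i^1,\boldsymbol h_i^2$ of $i$ that are immediate successors of a common information set $\boldsymbol h_i$ of $i$ with $\Theta_i(\boldsymbol h_i^1)=\Theta_i(\boldsymbol h_i^2)$, and any histories $h^1\in\boldsymbol h_i^1$, $h^2\in\boldsymbol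 h_i^2$ that are both consistent with a common strategy profile $s_{-i,j}$, there exists $h^k\in\{h^1,h^2\}$ such that $f(\theta)\,R(\theta_j^* )\,f(\theta')$ for all $\theta,\theta'\in\Theta(h^k)$ and all $\theta_j^*\in\Theta_j$. *)

theory Defs
  imports Main "HOL-Library.Sublist" "HOL-Library.FuncSet"
begin

text \<open>A history is a finite list of action profiles; an action profile is a partial
map from agents to actions whose domain is the set of agents moving at that history.\<close>

type_synonym ('i, 'a) hist = "('i \<Rightarrow> 'a option) list"

record ('i, 'a, 'x) game =
  hist :: "('i, 'a) hist set"
  mov  :: "('i, 'a) hist \<Rightarrow> 'i set"
  act  :: "'i \<Rightarrow> ('i, 'a) hist \<Rightarrow> 'a set"
  info :: "'i \<Rightarrow> ('i, 'a) hist set set"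
  outc :: "('i, 'a) hist \<Rightarrow> 'x"

definition nonterm :: "('i, 'a, 'x) game \<Rightarrow> ('i, 'a) hist set" where
  "nonterm G = {h \<in> hist G. \<exists>a. h @ [a] \<in> hist G}"

definition terminal :: "('i, 'a, 'x) game \<Rightarrow> ('i, 'a) hist set" where
  "terminal G = hist G - nonterm G"

definition dec_nodes :: "('i, 'a, 'x) game \<Rightarrow> 'i \<Rightarrow> ('i, 'a) hist set" where
  "dec_nodes G i = {h \<in> nonterm G. i \<in> mov G h}"

definition infoset_of :: "('i, 'a, 'x) game \<Rightarrow> 'i \<Rightarrow> ('i, 'a) hist \<Rightarrow> ('i, 'a) hist set" where
  "infoset_of G i h = (THE I. I \<in> info G i \<and> h \<in> I)"

definition experience :: "('i, 'a, 'x) game \<Rightarrow> 'i \<Rightarrow> ('i, 'a) hist \<Rightarrow> (('i, 'a) hist set \<times> 'a) list" where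
  "experience G i h =
     map (\<lambda>k. (infoset_of G i (take k h), the ((h ! k) i)))
         (filter (\<lambda>k. i \<in> mov G (take k h)) [0..<length h])"

definition game_form :: "'i set \<Rightarrow> ('i, 'a, 'x) game \<Rightarrow> bool" where
  "game_form N G \<longleftrightarrow>
     finite (hist G) \<and> [] \<in> hist G \<and>
     (\<forall>h \<in> hist G. \<forall>g. prefix g h \<longrightarrow> g \<in> hist G) \<and>
     [] \<in> nonterm G \<and> mov G [] = N \<and>
     (\<forall>h \<in> nonterm G. mov G h \<noteq> {} \<and> mov G h \<subseteq> N \<and>
        (\<forall>i \<in> mov G h. act G i h \<noteq> {}) \<and>
        (\<forall>a. h @ [a] \<in> hist G \<longleftrightarrow>
               (dom a = mov G h \<and> (\<forall>i \<in> mov G h. the (a i) \<in> act G i h)))) \<and>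
     (\<forall>i \<in> N.
        {} \<notin> info G i \<and> \<Union> (info G i) = dec_nodes G i \<and>
        (\<forall>I \<in> info G i. \<forall>J \<in> info G i. I \<noteq> J \<longrightarrow> I \<inter> J = {}) \<and>
        (\<forall>I \<in> info G i. \<forall>h \<in> I. \<forall>h' \<in> I. act G i h = act G i h') \<and>
        (\<forall>I \<in> info G i. \<forall>h \<in> I. \<forall>h' \<in> I. experience G i h = experience G i h'))"

definition strategy :: "('i, 'a, 'x) game \<Rightarrow> 'i \<Rightarrow> (('i, 'a) hist \<Rightarrow> 'a) \<Rightarrow> bool" where
  "strategy G i \<sigma> \<longleftrightarrow>
     (\<forall>h \<in> dec_nodes G i. \<sigma> h \<in> act G i h) \<and>
     (\<forall>I \<in> info G i. \<forall>h \<in> I. \<forall>h' \<in> I. \<sigma> h = \<sigma> h')"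

definition step :: "('i, 'a, 'x) game \<Rightarrow> ('i \<Rightarrow> ('i, 'a) hist \<Rightarrow> 'a) \<Rightarrow> ('i, 'a) hist \<Rightarrow> ('i, 'a) hist" where
  "step G s h = (if h \<in> nonterm G
                 then h @ [\<lambda>i. if i \<in> mov G h then Some (s i h) else None] else h)"

definition play :: "('i, 'a, 'x) game \<Rightarrow> ('i \<Rightarrow> ('i, 'a) hist \<Rightarrow> 'a) \<Rightarrow> ('i, 'a) hist" where
  "play G s = (step G s ^^ card (hist G)) []"

definition outcome :: "('i, 'a, 'x) game \<Rightarrow> ('i \<Rightarrow> ('i, 'a) hist \<Rightarrow> 'a) \<Rightarrow> 'x" where
  "outcome G s = outc G (play G s)"

definition consistent :: "'i set \<Rightarrow> ('i, 'a, 'x) game \<Rightarrow> 'i set \<Rightarrow> ('i \<Rightarrow> ('i, 'a) hist \<Rightarrow> 'a)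
                          \<Rightarrow> ('i, 'a) hist \<Rightarrow> bool" where
  "consistent N G M s h \<longleftrightarrow>
     (\<exists>t. (\<forall>i \<in> N. strategy G i (t i)) \<and> (\<forall>i \<in> M. t i = s i) \<and> prefix h (play G t))"

definition info_prec :: "('i, 'a) hist set \<Rightarrow> ('i, 'a) hist set \<Rightarrow> bool" where
  "info_prec I J \<longleftrightarrow> (\<exists>h \<in> I. \<exists>h' \<in> J. strict_prefix h h')"

definition immediate_succ :: "('i, 'a, 'x) game \<Rightarrow> 'i \<Rightarrow> ('i, 'a) hist set \<Rightarrow> ('i, 'a) hist set \<Rightarrow> bool" where
  "immediate_succ G i I J \<longleftrightarrow>
     info_prec I J \<and> \<not> (\<exists>K \<in> info G i. info_prec I K \<and> info_prec K J)"

definition typeset_at :: "('i \<Rightarrow> 'th set) \<Rightarrow> 'i \<Rightarrow> ('i, 'th set) hist \<Rightarrow> 'th set" where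
  "typeset_at Th i h = (case filter (\<lambda>a. a i \<noteq> None) h of
                          [] \<Rightarrow> Th i
                        | xs \<Rightarrow> the (last xs i))"

definition typeprofs_at :: "'i set \<Rightarrow> ('i \<Rightarrow> 'th set) \<Rightarrow> ('i, 'th set) hist \<Rightarrow> ('i \<Rightarrow> 'th) set" where
  "typeprofs_at N Th h = PiE N (\<lambda>i. typeset_at Th i h)"

definition typeset_info :: "('i \<Rightarrow> 'th set) \<Rightarrow> 'i \<Rightarrow> ('i, 'th set) hist set \<Rightarrow> 'th set" where
  "typeset_info Th i I = typeset_at Th i (SOME h. h \<in> I)"

definition gradual_mech ::
  "'i set \<Rightarrow> ('i \<Rightarrow> 'th set) \<Rightarrow> (('i \<Rightarrow> 'th) \<Rightarrow> 'x) \<Rightarrow> ('i, 'th set, 'x) game \<Rightarrow> bool" where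
  "gradual_mech N Th f G \<longleftrightarrow>
     game_form N G \<and>
     (\<forall>h \<in> nonterm G. \<forall>i \<in> mov G h. \<forall>a \<in> act G i h. a \<noteq> {} \<and> a \<subseteq> Th i) \<and>
     (\<forall>i \<in> N. \<forall>h \<in> dec_nodes G i.
        (\<forall>a \<in> act G i h. \<forall>b \<in> act G i h. a \<noteq> b \<longrightarrow> a \<inter> b = {}) \<and>
        \<Union> (act G i h) = typeset_at Th i h) \<and>
     (\<forall>z \<in> terminal G. \<forall>\<theta> \<in> typeprofs_at N Th z. outc G z = f \<theta>)"

definition strategy_proof ::
  "'i set \<Rightarrow> ('i \<Rightarrow> 'th set) \<Rightarrow> ('i \<Rightarrow> 'th \<Rightarrow> 'x \<Rightarrow> 'x \<Rightarrow> bool) \<Rightarrow> (('i \<Rightarrow> 'th) \<Rightarrow> 'x) \<Rightarrow> bool" where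
  "strategy_proof N Th R f \<longleftrightarrow>
     (\<forall>i \<in> N. \<forall>\<theta> \<in> PiE N Th. \<forall>\<theta>i' \<in> Th i. R i (\<theta> i) (f \<theta>) (f (\<theta>(i := \<theta>i'))))"

definition unconditional ::
  "('i \<Rightarrow> 'th set) \<Rightarrow> ('i, 'th set, 'x) game \<Rightarrow> 'i \<Rightarrow> 'th \<Rightarrow> (('i, 'th set) hist \<Rightarrow> 'th set) \<Rightarrow> bool" where
  "unconditional Th G i \<theta>i \<sigma> \<longleftrightarrow>
     (\<forall>h \<in> dec_nodes G i. \<theta>i \<in> typeset_at Th i h \<longrightarrow> \<theta>i \<in> \<sigma> h)"

definition incentive_compatible ::
  "'i set \<Rightarrow> ('i \<Rightarrow> 'th set) \<Rightarrow> ('i \<Rightarrow> 'th \<Rightarrow> 'x \<Rightarrow> 'x \<Rightarrow> bool) \<Rightarrow> ('i, 'th set, 'x) game \<Rightarrow> bool" where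
  "incentive_compatible N Th R G \<longleftrightarrow>
     (\<forall>i \<in> N. \<forall>\<theta>i \<in> Th i. \<forall>\<sigma>u \<sigma> s.
        strategy G i \<sigma>u \<and> unconditional Th G i \<theta>i \<sigma>u \<and> strategy G i \<sigma> \<and>
        (\<forall>k \<in> N - {i}. strategy G k (s k)) \<longrightarrow>
        R i \<theta>i (outcome G (s(i := \<sigma>u))) (outcome G (s(i := \<sigma>))))"

definition indiff_reaction_proof ::
  "'i set \<Rightarrow> ('i \<Rightarrow> 'th set) \<Rightarrow> ('i \<Rightarrow> 'th \<Rightarrow> 'x \<Rightarrow> 'x \<Rightarrow> bool) \<Rightarrow> (('i \<Rightarrow> 'th) \<Rightarrow> 'x)
     \<Rightarrow> ('i, 'th set, 'x) game \<Rightarrow> bool" where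
  "indiff_reaction_proof N Th R f G \<longleftrightarrow>
     (\<forall>i \<in> N. \<forall>j \<in> N. i \<noteq> j \<longrightarrow>
       (\<forall>I \<in> info G i. \<forall>I1 \<in> info G i. \<forall>I2 \<in> info G i.
          I1 \<noteq> I2 \<and> immediate_succ G i I I1 \<and> immediate_succ G i I I2 \<and>
          typeset_info Th i I1 = typeset_info Th i I2 \<longrightarrow>
          (\<forall>h1 \<in> I1. \<forall>h2 \<in> I2.
             (\<exists>s. (\<forall>k \<in> N - {i, j}. strategy G k (s k)) \<and>
                  consistent N G (N - {i, j}) s h1 \<and> consistent N G (N - {i, j}) s h2) \<longrightarrow>
             (\<exists>hk \<in> {h1, h2}. \<forall>\<theta> \<in> typeprofs_at N Th hk. \<forall>\<theta>' \<in> typeprofs_at N Th hk.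
                 \<forall>\<theta>j \<in> Th j. R j \<theta>j (f \<theta>) (f \<theta>')))))"

definition complete_transitive_on :: "'x set \<Rightarrow> ('x \<Rightarrow> 'x \<Rightarrow> bool) \<Rightarrow> bool" where
  "complete_transitive_on X r \<longleftrightarrow>
     (\<forall>x \<in> X. \<forall>y \<in> X. r x y \<or> r y x) \<and>
     (\<forall>x \<in> X. \<forall>y \<in> X. \<forall>z \<in> X. r x y \<longrightarrow> r y z \<longrightarrow> r x z)"

end

theory Submission
  imports Defs
begin
lemma gf_prefix0: "game_form N G \<Longrightarrow> (\<forall>h \<in> hist G. \<forall>g. prefix g h \<longrightarrow> g \<in> hist G)"
  unfolding game_form_def by (elim conjE) assumption
lemma gf_prefix: "game_form N G \<Longrightarrow> h \<in> hist G \<Longrightarrow> prefix g h \<Longrightarrow> g \<in> hist G"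
  using gf_prefix0 by metis

lemma gf_nonterm:
  "game_form N G \<Longrightarrow> h \<in> nonterm G \<Longrightarrow> mov G h \<noteq> {} \<and> mov G h \<subseteq> N \<and>
        (\<forall>i \<in> mov G h. act G i h \<noteq> {}) \<and>
        (\<forall>a. h @ [a] \<in> hist G \<longleftrightarrow>
               (dom a = mov G h \<and> (\<forall>i \<in> mov G h. the (a i) \<in> act G i h)))"
  unfolding game_form_def by (elim conjE) (drule bspec, assumption, assumption)

lemma gf_agent:
  "game_form N G \<Longrightarrow> i \<in> N \<Longrightarrow>
        {} \<notin> info G i \<and> \<Union> (info G i) = dec_nodes G i \<and>
        (\<forall>I \<in> info G i. \<forall>J \<in> info G i. I \<noteq> J \<longrightarrow> I \<inter> J = {}) \<and>
        (\<forall>I \<in> info G i. \<forall>h \<in> I. \<forall>h' \<in> I. act G i h = act G i h') \<and>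
        (\<forall>I \<in> info G i. \<forall>h \<in> I. \<forall>h' \<in> I. experience G i h = experience G i h')"
  unfolding game_form_def by (elim conjE) (drule bspec, assumption, assumption)

lemma gf_root: "game_form N G \<Longrightarrow> [] \<in> nonterm G \<and> mov G [] = N \<and> finite (hist G)"
  unfolding game_form_def by (elim conjE) (intro conjI; assumption)

lemma gf_snoc:
  assumes "game_form N G" "h @ [a] \<in> hist G"
  shows "h \<in> nonterm G \<and> dom a = mov G h \<and> (\<forall>i\<in>mov G h. the (a i) \<in> act G i h)"
proof -
  have "h \<in> hist G" using gf_prefix[OF assms(1,2)] by (simp add: prefixI)
  then have nt: "h \<in> nonterm G" using assms(2) unfolding nonterm_def by blast
  have "dom a = mov G h \<and> (\<forall>i\<in>mov G h. the (a i) \<in> act G i h)"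
    using gf_nonterm[OF assms(1) nt] assms(2) by simp
  then show ?thesis using nt by simp
qed

lemma gf_ext:
  assumes "game_form N G" "h \<in> nonterm G" "dom a = mov G h" "\<forall>i\<in>mov G h. the (a i) \<in> act G i h"
  shows "h @ [a] \<in> hist G"
  using assms(3,4) gf_nonterm[OF assms(1,2)] by simp

lemma exp_snoc:
  "experience G i (h @ [a]) = experience G i h @
     (if i \<in> mov G h then [(infoset_of G i h, the (a i))] else [])"
proof -
  have f: "filter (\<lambda>k. i \<in> mov G (take k (h @ [a]))) [0..<length h]
         = filter (\<lambda>k. i \<in> mov G (take k h)) [0..<length h]"
    by (rule filter_cong) auto
  have m: "map (\<lambda>k. (infoset_of G i (take k (h @ [a])), the (((h @ [a]) ! k) i)))
              (filter (\<lambda>k. i \<in> mov G (take k h)) [0..<length h])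
         = map (\<lambda>k. (infoset_of G i (take k h), the ((h ! k) i)))
              (filter (\<lambda>k. i \<in> mov G (take k h)) [0..<length h])"
    by (rule map_cong) (auto simp: nth_append)
  have u: "[0..<length (h @ [a])] = [0..<length h] @ [length h]" by simp
  have l: "map (\<lambda>k. (infoset_of G i (take k (h @ [a])), the (((h @ [a]) ! k) i)))
              (filter (\<lambda>k. i \<in> mov G (take k (h @ [a]))) [length h])
         = (if i \<in> mov G h then [(infoset_of G i h, the (a i))] else [])"
    by simp
  show ?thesis
    unfolding experience_def u filter_append map_append f m l ..
qed

lemma ts_nil: "typeset_at Th i [] = Th i"
  by (simp add: typeset_at_def)

lemma ts_snoc: "typeset_at Th i (h @ [a]) = (if a i \<noteq> None then the (a i) else typeset_at Th i h)"
  unfolding typeset_at_def by (simp add: list.case_eq_if)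


lemma gm_parts0:
  assumes "gradual_mech N Th f G"
  shows "game_form N G \<and>
     (\<forall>h \<in> nonterm G. \<forall>i \<in> mov G h. \<forall>a \<in> act G i h. a \<noteq> {} \<and> a \<subseteq> Th i) \<and>
     (\<forall>i \<in> N. \<forall>h \<in> dec_nodes G i.
        (\<forall>a \<in> act G i h. \<forall>b \<in> act G i h. a \<noteq> b \<longrightarrow> a \<inter> b = {}) \<and>
        \<Union> (act G i h) = typeset_at Th i h) \<and>
     (\<forall>z \<in> terminal G. \<forall>\<theta> \<in> typeprofs_at N Th z. outc G z = f \<theta>)"
  using assms unfolding gradual_mech_def .

lemma gm_parts:
  assumes "gradual_mech N Th f G"
  shows "game_form N G"
    "\<And>h i a. h \<in> nonterm G \<Longrightarrow> i \<in> mov G h \<Longrightarrow> a \<in> act G i h \<Longrightarrow> a \<noteq> {} \<and> a \<subseteq> Th i"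
    "\<And>i h. i \<in> N \<Longrightarrow> h \<in> dec_nodes G i \<Longrightarrow> \<Union> (act G i h) = typeset_at Th i h"
    "\<And>z \<theta>. z \<in> terminal G \<Longrightarrow> \<theta> \<in> typeprofs_at N Th z \<Longrightarrow> outc G z = f \<theta>"
proof -
  note g = gm_parts0[OF assms]
  show "game_form N G" using g by (elim conjE)
  show "\<And>h i a. h \<in> nonterm G \<Longrightarrow> i \<in> mov G h \<Longrightarrow> a \<in> act G i h \<Longrightarrow> a \<noteq> {} \<and> a \<subseteq> Th i"
  proof -
    fix h i a assume "h \<in> nonterm G" "i \<in> mov G h" "a \<in> act G i h"
    then show "a \<noteq> {} \<and> a \<subseteq> Th i" using conjunct1[OF conjunct2[OF g]] by simp
  qed
  show "\<And>i h. i \<in> N \<Longrightarrow> h \<in> dec_nodes G i \<Longrightarrow> \<Union> (act G i h) = typeset_at Th i h"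
  proof -
    fix i h assume "i \<in> N" "h \<in> dec_nodes G i"
    then show "\<Union> (act G i h) = typeset_at Th i h" using conjunct1[OF conjunct2[OF conjunct2[OF g]]] by simp
  qed
  show "\<And>z \<theta>. z \<in> terminal G \<Longrightarrow> \<theta> \<in> typeprofs_at N Th z \<Longrightarrow> outc G z = f \<theta>"
  proof -
    fix z \<theta> assume "z \<in> terminal G" "\<theta> \<in> typeprofs_at N Th z"
    then show "outc G z = f \<theta>" using conjunct2[OF conjunct2[OF conjunct2[OF g]]] by simp
  qed
qed

lemma hist_take:
  assumes "game_form N G" "h \<in> hist G" "k < length h"
  shows "take k h \<in> nonterm G \<and> dom (h ! k) = mov G (take k h) \<and>
         (\<forall>i\<in>mov G (take k h). the ((h ! k) i) \<in> act G i (take k h))"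
proof -
  have "take (Suc k) h \<in> hist G" using gf_prefix[OF assms(1,2) take_is_prefix] .
  moreover have "take (Suc k) h = take k h @ [h ! k]" using assms(3) by (simp add: take_Suc_conv_app_nth)
  ultimately show ?thesis using gf_snoc[OF assms(1)] by metis
qed

lemma ts_exp:
  assumes "game_form N G" "h \<in> hist G"
  shows "typeset_at Th i h = (if experience G i h = [] then Th i else snd (last (experience G i h)))"
  using assms(2)
proof (induction h rule: rev_induct)
  case Nil
  then show ?case by (simp add: ts_nil experience_def)
next
  case (snoc a h)
  have h: "h \<in> hist G" using gf_prefix[OF assms(1) snoc.prems] by (simp add: prefixI)
  have d: "dom a = mov G h" using gf_snoc[OF assms(1) snoc.prems] by simp
  have "(a i \<noteq> None) = (i \<in> mov G h)" using d by auto
  then show ?case using snoc.IH[OF h] by (simp add: ts_snoc exp_snoc)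
qed

lemma ts_sub:
  assumes "gradual_mech N Th f G" "h \<in> hist G" "i \<in> N"
  shows "typeset_at Th i h \<subseteq> Th i \<and> typeset_at Th i h \<noteq> {}"
  using assms(2)
proof (induction h rule: rev_induct)
  case Nil
  have gf: "game_form N G" using gm_parts(1)[OF assms(1)] .
  have r: "[] \<in> nonterm G" "mov G [] = N" using gf_root[OF gf] by auto
  then have "act G i [] \<noteq> {}" using gf_nonterm[OF gf r(1)] assms(3) by auto
  then obtain b where "b \<in> act G i []" by blast
  then have "b \<noteq> {} \<and> b \<subseteq> Th i" using gm_parts(2)[OF assms(1) r(1)] r(2) assms(3) by auto
  then show ?case by (auto simp: ts_nil)
next
  case (snoc a h)
  have gf: "game_form N G" using gm_parts(1)[OF assms(1)] .
  have h: "h \<in> hist G" using gf_prefix[OF gf snoc.prems] by (simp add: prefixI)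
  have s: "h \<in> nonterm G \<and> dom a = mov G h \<and> (\<forall>i\<in>mov G h. the (a i) \<in> act G i h)"
    using gf_snoc[OF gf snoc.prems] .
  show ?case
  proof (cases "a i = None")
    case True then show ?thesis using snoc.IH[OF h] by (simp add: ts_snoc)
  next
    case False
    then have "i \<in> mov G h" using s by auto
    then have "the (a i) \<noteq> {} \<and> the (a i) \<subseteq> Th i" using gm_parts(2)[OF assms(1)] s by blast
    then show ?thesis using False by (simp add: ts_snoc)
  qed
qed

lemma ts_mono_snoc:
  assumes "gradual_mech N Th f G" "h @ [a] \<in> hist G" "i \<in> N"
  shows "typeset_at Th i (h @ [a]) \<subseteq> typeset_at Th i h"
proof -
  have gf: "game_form N G" using gm_parts(1)[OF assms(1)] .
  have s: "h \<in> nonterm G \<and> dom a = mov G h \<and> (\<forall>i\<in>mov G h. the (a i) \<in> act G i h)"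
    using gf_snoc[OF gf assms(2)] .
  show ?thesis
  proof (cases "a i = None")
    case True then show ?thesis by (simp add: ts_snoc)
  next
    case False
    then have m: "i \<in> mov G h" using s by auto
    then have "h \<in> dec_nodes G i" using s by (simp add: dec_nodes_def)
    then have "\<Union> (act G i h) = typeset_at Th i h" using gm_parts(3)[OF assms(1) assms(3)] by blast
    moreover have "the (a i) \<in> act G i h" using s m by blast
    ultimately show ?thesis using False by (auto simp: ts_snoc)
  qed
qed

lemma ts_mono:
  assumes "gradual_mech N Th f G" "h \<in> hist G" "i \<in> N" "prefix g h"
  shows "typeset_at Th i h \<subseteq> typeset_at Th i g"
  using assms(2,4)
proof (induction h rule: rev_induct)
  case Nil then show ?case by simp
next
  case (snoc a h)
  have gf: "game_form N G" using gm_parts(1)[OF assms(1)] .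
  have h: "h \<in> hist G" using gf_prefix[OF gf snoc.prems(1)] by (simp add: prefixI)
  show ?case
  proof (cases "g = h @ [a]")
    case True then show ?thesis by simp
  next
    case False
    then have "prefix g h" using snoc.prems(2) by simp
    then show ?thesis using snoc.IH[OF h] ts_mono_snoc[OF assms(1) snoc.prems(1) assms(3)] by blast
  qed
qed

lemma exp_mono:
  assumes "prefix g h"
  shows "prefix (experience G i g) (experience G i h)"
  using assms
proof (induction h rule: rev_induct)
  case Nil then show ?case by simp
next
  case (snoc a h)
  show ?case
  proof (cases "g = h @ [a]")
    case True then show ?thesis by simp
  next
    case False
    then have "prefix g h" using snoc.prems by simp
    then show ?thesis using snoc.IH by (auto simp: exp_snoc intro: prefix_order.trans)
  qed
qed

lemma exp_strict:
  assumes "strict_prefix g h" "i \<in> mov G g"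
  shows "length (experience G i g) < length (experience G i h)"
proof -
  obtain z zs where h: "h = g @ z # zs" using assms(1) by (rule strict_prefixE')
  have "prefix (g @ [z]) h" using h by (simp add: prefixI)
  then have "prefix (experience G i (g @ [z])) (experience G i h)" by (rule exp_mono)
  then have "length (experience G i (g @ [z])) \<le> length (experience G i h)" by (rule prefix_length_le)
  then show ?thesis using assms(2) by (simp add: exp_snoc)
qed

lemma exp_nth:
  assumes "n < length (experience G i x)"
  shows "\<exists>k<length x. i \<in> mov G (take k x) \<and> experience G i (take k x) = take n (experience G i x)
          \<and> experience G i x ! n = (infoset_of G i (take k x), the ((x ! k) i))"
  using assms
proof (induction x rule: rev_induct)
  case Nil then show ?case by (simp add: experience_def)
next
  case (snoc a x)
  show ?case
  proof (cases "n < length (experience G i x)")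
    case True
    then obtain k where k: "k<length x" "i \<in> mov G (take k x)"
      "experience G i (take k x) = take n (experience G i x)"
      "experience G i x ! n = (infoset_of G i (take k x), the ((x ! k) i))"
      using snoc.IH by blast
    show ?thesis
      by (rule exI[of _ k]) (use k True in \<open>simp add: exp_snoc nth_append\<close>)
  next
    case False
    then have m: "i \<in> mov G x" and n: "n = length (experience G i x)"
      using snoc.prems by (auto simp: exp_snoc split: if_splits)
    show ?thesis
      by (rule exI[of _ "length x"]) (use m n in \<open>simp add: exp_snoc nth_append\<close>)
  qed
qed

lemma infoset_props:
  assumes "game_form N G" "i \<in> N" "h \<in> dec_nodes G i"
  shows "infoset_of G i h \<in> info G i \<and> h \<in> infoset_of G i h"
proof -
  have a: "\<Union> (info G i) = dec_nodes G i" "\<forall>I \<in> info G i. \<forall>J \<in> info G i. I \<noteq> J \<longrightarrow> I \<inter> J = {}"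
    using gf_agent[OF assms(1,2)] by auto
  obtain I where I: "I \<in> info G i" "h \<in> I" using a(1) assms(3) by blast
  have "infoset_of G i h = I" unfolding infoset_of_def
    by (rule the_equality) (use I a(2) in blast)+
  then show ?thesis using I by simp
qed

lemma infoset_eq:
  assumes "game_form N G" "i \<in> N" "I \<in> info G i" "h \<in> I"
  shows "infoset_of G i h = I"
proof -
  have a: "\<forall>I \<in> info G i. \<forall>J \<in> info G i. I \<noteq> J \<longrightarrow> I \<inter> J = {}"
    using gf_agent[OF assms(1,2)] by auto
  show ?thesis unfolding infoset_of_def
    by (rule the_equality) (use assms a in blast)+
qed


definition prof :: "('i, 'a, 'x) game \<Rightarrow> ('i \<Rightarrow> ('i, 'a) hist \<Rightarrow> 'a) \<Rightarrow> ('i, 'a) hist \<Rightarrow> ('i \<Rightarrow> 'a option)" where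
  "prof G t h = (\<lambda>i. if i \<in> mov G h then Some (t i h) else None)"

lemma step_iter:
  assumes gf: "game_form N G" and strat: "\<forall>j\<in>N. strategy G j (t j)"
  shows "(step G t ^^ n) [] \<in> hist G \<and>
    (\<forall>k < length ((step G t ^^ n) []). (step G t ^^ n) [] ! k = prof G t (take k ((step G t ^^ n) []))) \<and>
    ((step G t ^^ n) [] \<in> nonterm G \<longrightarrow> length ((step G t ^^ n) []) = n)"
proof (induction n)
  case 0
  have "[] \<in> nonterm G" using gf_root[OF gf] by simp
  then show ?case by (simp add: nonterm_def)
next
  case (Suc n)
  define h where "h = (step G t ^^ n) []"
  have IH: "h \<in> hist G" "\<forall>k < length h. h ! k = prof G t (take k h)" "h \<in> nonterm G \<longrightarrow> length h = n"
    using Suc.IH unfolding h_def by auto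
  have e: "(step G t ^^ Suc n) [] = step G t h" by (simp add: h_def)
  show ?case
  proof (cases "h \<in> nonterm G")
    case False
    then have "step G t h = h" by (simp add: step_def)
    then show ?thesis using IH False e by simp
  next
    case True
    have st: "step G t h = h @ [prof G t h]" using True by (simp add: step_def prof_def)
    have mN: "mov G h \<subseteq> N" using gf_nonterm[OF gf True] by simp
    have "\<forall>i\<in>mov G h. the (prof G t h i) \<in> act G i h"
    proof
      fix i assume i: "i \<in> mov G h"
      then have "h \<in> dec_nodes G i" using True by (simp add: dec_nodes_def)
      moreover have "strategy G i (t i)" using strat i mN by blast
      ultimately show "the (prof G t h i) \<in> act G i h" using i by (simp add: strategy_def prof_def)
    qed
    moreover have "dom (prof G t h) = mov G h" by (auto simp: prof_def split: if_splits)
    ultimately have hh: "h @ [prof G t h] \<in> hist G" using gf_ext[OF gf True] by blast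
    have "\<forall>k < length (h @ [prof G t h]). (h @ [prof G t h]) ! k = prof G t (take k (h @ [prof G t h]))"
      using IH(2) by (auto simp: nth_append less_Suc_eq)
    then show ?thesis using hh IH(3) True e st by simp
  qed
qed

lemma play_props:
  assumes gf: "game_form N G" and strat: "\<forall>j\<in>N. strategy G j (t j)"
  shows "play G t \<in> terminal G" "\<And>k. k < length (play G t) \<Longrightarrow> play G t ! k = prof G t (take k (play G t))"
proof -
  define p where "p = play G t"
  have P: "p \<in> hist G" "\<forall>k < length p. p ! k = prof G t (take k p)" "p \<in> nonterm G \<longrightarrow> length p = card (hist G)"
    using step_iter[OF gf strat, of "card (hist G)"] unfolding p_def play_def by auto
  show "\<And>k. k < length (play G t) \<Longrightarrow> play G t ! k = prof G t (take k (play G t))"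
    using P(2) unfolding p_def by blast
  have "p \<notin> nonterm G"
  proof
    assume nt: "p \<in> nonterm G"
    have fin: "finite (hist G)" using gf_root[OF gf] by simp
    have sub: "(\<lambda>k. take k p) ` {0..length p} \<subseteq> hist G"
      by (rule image_subsetI) (rule gf_prefix[OF gf P(1) take_is_prefix])
    have inj: "inj_on (\<lambda>k. take k p) {0..length p}"
      proof (rule inj_onI)
      fix a b assume "a \<in> {0..length p}" "b \<in> {0..length p}" "take a p = take b p"
      then have "length (take a p) = length (take b p)" by simp
      then show "a = b" using \<open>a \<in> {0..length p}\<close> \<open>b \<in> {0..length p}\<close> by simp
    qed
    have "card ((\<lambda>k. take k p) ` {0..length p}) \<le> card (hist G)" by (rule card_mono[OF fin sub])
    then have "Suc (length p) \<le> card (hist G)" using card_image[OF inj] by simp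
    then show False using P(3) nt by simp
  qed
  then show "play G t \<in> terminal G" using P(1) unfolding p_def terminal_def by blast
qed

lemma uncond_play:
  assumes gm: "gradual_mech N Th f G" and strat: "\<forall>j\<in>N. strategy G j (t j)"
    and dN: "d \<in> N" and th: "\<theta> \<in> Th d" and unc: "unconditional Th G d \<theta> (t d)"
  shows "\<theta> \<in> typeset_at Th d (play G t)"
proof -
  have gf: "game_form N G" using gm_parts(1)[OF gm] .
  define p where "p = play G t"
  have pr: "\<And>k. k < length p \<Longrightarrow> p ! k = prof G t (take k p)" using play_props(2)[OF gf strat] p_def by blast
  have ph: "p \<in> hist G" using play_props(1)[OF gf strat] p_def by (simp add: terminal_def)
  have "k \<le> length p \<Longrightarrow> \<theta> \<in> typeset_at Th d (take k p)" for k
  proof (induction k)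
    case 0 then show ?case using th by (simp add: ts_nil)
  next
    case (Suc k)
    then have k: "k < length p" by simp
    have ts: "take (Suc k) p = take k p @ [p ! k]" using k by (simp add: take_Suc_conv_app_nth)
    have IH: "\<theta> \<in> typeset_at Th d (take k p)" using Suc by simp
    have nt: "take k p \<in> nonterm G" using hist_take[OF gf ph k] by simp
    show ?case
    proof (cases "d \<in> mov G (take k p)")
      case True
      then have "take k p \<in> dec_nodes G d" using nt by (simp add: dec_nodes_def)
      then have "\<theta> \<in> t d (take k p)" using unc IH by (simp add: unconditional_def)
      then show ?thesis using True ts pr[OF k] by (simp add: ts_snoc prof_def)
    next
      case False
      then show ?thesis using IH ts pr[OF k] by (simp add: ts_snoc prof_def)
    qed
  qed
  then show ?thesis unfolding p_def[symmetric] by (metis order_refl take_all)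
qed


definition indiff :: "'i set \<Rightarrow> ('i \<Rightarrow> 'th set) \<Rightarrow> ('i \<Rightarrow> 'th \<Rightarrow> 'x \<Rightarrow> 'x \<Rightarrow> bool) \<Rightarrow> (('i \<Rightarrow> 'th) \<Rightarrow> 'x)
     \<Rightarrow> 'i \<Rightarrow> ('i, 'th set) hist \<Rightarrow> bool" where
  "indiff N Th R f d h \<longleftrightarrow> (\<forall>\<theta> \<in> typeprofs_at N Th h. \<forall>\<theta>' \<in> typeprofs_at N Th h.
                 \<forall>\<theta>j \<in> Th d. R d \<theta>j (f \<theta>) (f \<theta>'))"

lemma irp_apply:
  assumes irp: "indiff_reaction_proof N Th R f G"
    and "i \<in> N" "j \<in> N" "i \<noteq> j" "I \<in> info G i" "I1 \<in> info G i" "I2 \<in> info G i"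
    "I1 \<noteq> I2" "immediate_succ G i I I1" "immediate_succ G i I I2"
    "typeset_info Th i I1 = typeset_info Th i I2" "h1 \<in> I1" "h2 \<in> I2"
    "\<forall>k \<in> N - {i, j}. strategy G k (s k)"
    "consistent N G (N - {i, j}) s h1" "consistent N G (N - {i, j}) s h2"
  shows "indiff N Th R f j h1 \<or> indiff N Th R f j h2"
proof -
  have X: "\<forall>i \<in> N. \<forall>j \<in> N. i \<noteq> j \<longrightarrow>
       (\<forall>I \<in> info G i. \<forall>I1 \<in> info G i. \<forall>I2 \<in> info G i.
          I1 \<noteq> I2 \<and> immediate_succ G i I I1 \<and> immediate_succ G i I I2 \<and>
          typeset_info Th i I1 = typeset_info Th i I2 \<longrightarrow>
          (\<forall>h1 \<in> I1. \<forall>h2 \<in> I2.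
             (\<exists>s. (\<forall>k \<in> N - {i, j}. strategy G k (s k)) \<and>
                  consistent N G (N - {i, j}) s h1 \<and> consistent N G (N - {i, j}) s h2) \<longrightarrow>
             (\<exists>hk \<in> {h1, h2}. \<forall>\<theta> \<in> typeprofs_at N Th hk. \<forall>\<theta>' \<in> typeprofs_at N Th hk.
                 \<forall>\<theta>j \<in> Th j. R j \<theta>j (f \<theta>) (f \<theta>'))))"
    using irp unfolding indiff_reaction_proof_def .
  have E: "\<exists>s. (\<forall>k \<in> N - {i, j}. strategy G k (s k)) \<and>
                  consistent N G (N - {i, j}) s h1 \<and> consistent N G (N - {i, j}) s h2"
    using assms(14-16) by blast
  have "\<exists>hk \<in> {h1, h2}. \<forall>\<theta> \<in> typeprofs_at N Th hk. \<forall>\<theta>' \<in> typeprofs_at N Th hk.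
                 \<forall>\<theta>j \<in> Th j. R j \<theta>j (f \<theta>) (f \<theta>')"
    using X[rule_format, OF assms(2-7) _ assms(12,13) E] assms(8-11) by blast
  then show ?thesis unfolding indiff_def by blast
qed

lemma prefix_nth: "prefix xs ys \<Longrightarrow> n < length xs \<Longrightarrow> ys ! n = xs ! n"
  by (auto elim!: prefixE simp: nth_append)

lemma take_prefix_mono: "a \<le> b \<Longrightarrow> prefix (take a xs) (take b xs)"
proof -
  assume "a \<le> b"
  then have "take a xs = take a (take b xs)" by (simp add: min_def)
  then show ?thesis by (metis take_is_prefix)
qed

lemma take_strict_mono: "a < b \<Longrightarrow> b \<le> length xs \<Longrightarrow> strict_prefix (take a xs) (take b xs)"
proof -
  assume "a < b" "b \<le> length xs"
  then have "take a xs \<noteq> take b xs" by (metis length_take min.absorb2 nat_less_le order.strict_trans2)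
  then show ?thesis using take_prefix_mono[of a b xs] \<open>a < b\<close> by (simp add: strict_prefix_def)
qed

lemma nested:
  assumes gm: "gradual_mech N Th f G" and pN: "p \<in> N" and x: "x \<in> hist G" and y: "y \<in> hist G"
    and pre: "prefix (experience G p x) (experience G p y)" and ne: "experience G p x \<noteq> []"
  shows "typeset_at Th p y \<subseteq> typeset_at Th p x"
proof -
  have gf: "game_form N G" using gm_parts(1)[OF gm] .
  define n where "n = length (experience G p x) - 1"
  have n1: "n < length (experience G p x)" using ne by (simp add: n_def)
  have n2: "n < length (experience G p y)" using n1 prefix_length_le[OF pre] by simp
  obtain k where k: "k < length y" "p \<in> mov G (take k y)"
    "experience G p y ! n = (infoset_of G p (take k y), the ((y ! k) p))"
    using exp_nth[OF n2] by blast
  have l: "last (experience G p x) = experience G p y ! n"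
    using prefix_nth[OF pre n1] ne by (simp add: n_def last_conv_nth)
  have tx: "typeset_at Th p x = the ((y ! k) p)" using ts_exp[OF gf x, of Th p] ne l k(3) by simp
  have ht: "take k y \<in> nonterm G \<and> dom (y ! k) = mov G (take k y)" using hist_take[OF gf y k(1)] by blast
  then have "(y ! k) p \<noteq> None" using k(2) by auto
  then have t1: "typeset_at Th p (take (Suc k) y) = the ((y ! k) p)"
    using k(1) by (simp add: take_Suc_conv_app_nth ts_snoc)
  have "typeset_at Th p y \<subseteq> typeset_at Th p (take (Suc k) y)"
    by (rule ts_mono[OF gm y pN take_is_prefix])
  then show ?thesis using t1 tx by simp
qed


lemma key:
  assumes gm: "gradual_mech N Th f G" and irp: "indiff_reaction_proof N Th R f G"
    and dN: "d \<in> N" and pN: "p \<in> N" and pd: "p \<noteq> d"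
    and su: "\<forall>j\<in>N. strategy G j (tu j)" and sd: "\<forall>j\<in>N. strategy G j (td j)"
    and agree: "\<forall>j\<in>N. j \<noteq> d \<longrightarrow> td j = tu j"
    and xp: "prefix x (play G tu)" and yp: "prefix y (play G td)"
    and gx: "prefix (g @ [\<alpha>]) x" and gy: "prefix (g @ [\<beta>]) y" and ab: "\<alpha> p = \<beta> p"
    and minx: "\<forall>k. length g < k \<longrightarrow> k < length x \<longrightarrow> \<not> indiff N Th R f d (take k x)"
    and miny: "\<forall>k. length g < k \<longrightarrow> k < length y \<longrightarrow> \<not> indiff N Th R f d (take k y)"
  shows "typeset_at Th p x \<inter> typeset_at Th p y \<noteq> {}"
proof
  assume H: "typeset_at Th p x \<inter> typeset_at Th p y = {}"
  have gf: "game_form N G" using gm_parts(1)[OF gm] .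
  define zu where "zu = play G tu"
  define zd where "zd = play G td"
  have zuh: "zu \<in> hist G" using play_props(1)[OF gf su] by (simp add: zu_def terminal_def)
  have zdh: "zd \<in> hist G" using play_props(1)[OF gf sd] by (simp add: zd_def terminal_def)
  have xh: "x \<in> hist G" using gf_prefix[OF gf zuh] xp zu_def by blast
  have yh: "y \<in> hist G" using gf_prefix[OF gf zdh] yp zd_def by blast
  define ex where "ex = experience G p x"
  define ey where "ey = experience G p y"
  define e0 where "e0 = experience G p (g @ [\<alpha>])"
  have e0y: "experience G p (g @ [\<beta>]) = e0" unfolding e0_def using ab by (simp add: exp_snoc)
  have pe0x: "prefix e0 ex" unfolding e0_def ex_def by (rule exp_mono[OF gx])
  have pe0y: "prefix e0 ey" unfolding e0y[symmetric] ey_def by (rule exp_mono[OF gy])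
  have root: "mov G [] = N" using gf_root[OF gf] by simp
  have "length (experience G p []) < length e0"
    unfolding e0_def by (rule exp_strict) (use pN root in \<open>auto simp: strict_prefix_def\<close>)
  then have e0pos: "0 < length e0" by auto
  have exne: "ex \<noteq> []" using pe0x e0pos prefix_length_le by fastforce
  have eyne: "ey \<noteq> []" using pe0y e0pos prefix_length_le by fastforce
  have tyne: "typeset_at Th p y \<noteq> {}" using ts_sub[OF gm yh pN] by simp
  have txne: "typeset_at Th p x \<noteq> {}" using ts_sub[OF gm xh pN] by simp
  have np1: "\<not> prefix ex ey"
  proof
    assume "prefix ex ey"
    then have "typeset_at Th p y \<subseteq> typeset_at Th p x"
      using nested[OF gm pN xh yh] exne unfolding ex_def ey_def by blast
    then show False using H tyne by blast
  qed
  have np2: "\<not> prefix ey ex"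
  proof
    assume "prefix ey ex"
    then have "typeset_at Th p x \<subseteq> typeset_at Th p y"
      using nested[OF gm pN yh xh] eyne unfolding ex_def ey_def by blast
    then show False using H txne by blast
  qed
  obtain cs b bs c cs' where dec: "b \<noteq> c" "ex = cs @ b # bs" "ey = cs @ c # cs'"
    using parallel_decomp[of ex ey] np1 np2 by blast
  define n where "n = length cs"
  have nx: "n < length ex" "ex ! n = b" "take n ex = cs" using dec by (auto simp: n_def)
  have ny: "n < length ey" "ey ! n = c" "take n ey = cs" using dec by (auto simp: n_def)
  have ne0: "length e0 \<le> n"
  proof (rule ccontr)
    assume "\<not> length e0 \<le> n"
    then have "n < length e0" by simp
    then have "ex ! n = ey ! n" using prefix_nth[OF pe0x] prefix_nth[OF pe0y] by simp
    then show False using nx ny dec(1) by simp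
  qed
  then have npos: "1 \<le> n" using e0pos by linarith
  obtain kx where kx: "kx < length x" "p \<in> mov G (take kx x)" "experience G p (take kx x) = take n ex"
      "ex ! n = (infoset_of G p (take kx x), the ((x ! kx) p))"
    using exp_nth[of n G p x] nx(1) unfolding ex_def by blast
  obtain ky where ky: "ky < length y" "p \<in> mov G (take ky y)" "experience G p (take ky y) = take n ey"
      "ey ! n = (infoset_of G p (take ky y), the ((y ! ky) p))"
    using exp_nth[of n G p y] ny(1) unfolding ey_def by blast
  have nx1: "n - 1 < length ex" using nx(1) by simp
  have ny1: "n - 1 < length ey" using ny(1) by simp
  obtain kx' where kx': "kx' < length x" "p \<in> mov G (take kx' x)" "experience G p (take kx' x) = take (n - 1) ex"
      "ex ! (n - 1) = (infoset_of G p (take kx' x), the ((x ! kx') p))"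
    using exp_nth[of "n - 1" G p x] nx1 unfolding ex_def by blast
  obtain ky' where ky': "ky' < length y" "p \<in> mov G (take ky' y)" "experience G p (take ky' y) = take (n - 1) ey"
      "ey ! (n - 1) = (infoset_of G p (take ky' y), the ((y ! ky') p))"
    using exp_nth[of "n - 1" G p y] ny1 unfolding ey_def by blast
  define hx where "hx = take kx x"
  define hy where "hy = take ky y"
  define hx' where "hx' = take kx' x"
  define hy' where "hy' = take ky' y"
  have dx: "hx \<in> dec_nodes G p" using hist_take[OF gf xh kx(1)] kx(2) by (simp add: dec_nodes_def hx_def)
  have dy: "hy \<in> dec_nodes G p" using hist_take[OF gf yh ky(1)] ky(2) by (simp add: dec_nodes_def hy_def)
  have dx': "hx' \<in> dec_nodes G p" using hist_take[OF gf xh kx'(1)] kx'(2) by (simp add: dec_nodes_def hx'_def)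
  have dy': "hy' \<in> dec_nodes G p" using hist_take[OF gf yh ky'(1)] ky'(2) by (simp add: dec_nodes_def hy'_def)
  define I1 where "I1 = infoset_of G p hx"
  define I2 where "I2 = infoset_of G p hy"
  define K where "K = infoset_of G p hx'"
  have I1: "I1 \<in> info G p" "hx \<in> I1" using infoset_props[OF gf pN dx] by (auto simp: I1_def)
  have I2: "I2 \<in> info G p" "hy \<in> I2" using infoset_props[OF gf pN dy] by (auto simp: I2_def)
  have K: "K \<in> info G p" "hx' \<in> K" using infoset_props[OF gf pN dx'] by (auto simp: K_def)
  have "ex ! (n - 1) = ey ! (n - 1)"
  proof -
    have "n - 1 < n" using npos by simp
    then have "ex ! (n - 1) = cs ! (n - 1)" "ey ! (n - 1) = cs ! (n - 1)" using dec by (auto simp: n_def nth_append)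
    then show ?thesis by simp
  qed
  then have "K = infoset_of G p hy'" using kx'(4) ky'(4) by (simp add: K_def hx'_def hy'_def)
  then have Ky: "hy' \<in> K" using infoset_props[OF gf pN dy'] by simp
  have lx: "length (experience G p hx) = n" using kx(3) nx(1) by (simp add: hx_def)
  have ly: "length (experience G p hy) = n" using ky(3) ny(1) by (simp add: hy_def)
  have lx': "length (experience G p hx') = n - 1" using kx'(3) nx(1) by (simp add: hx'_def)
  have ly': "length (experience G p hy') = n - 1" using ky'(3) ny(1) by (simp add: hy'_def)
  have exx: "experience G p hx = cs" using kx(3) nx(3) by (simp add: hx_def)
  have exy: "experience G p hy = cs" using ky(3) ny(3) by (simp add: hy_def)
  have zu_p: "prefix x zu" using xp zu_def by simp
  have zd_p: "prefix y zd" using yp zd_def by simp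
  have ax: "the ((x ! kx) p) = tu p hx"
  proof -
    have kz: "kx < length zu" using kx(1) prefix_length_le[OF zu_p] by simp
    have "x ! kx = zu ! kx" using prefix_nth[OF zu_p kx(1)] by simp
    moreover have "take kx zu = hx" using zu_p kx(1) by (auto elim!: prefixE simp: hx_def)
    ultimately show ?thesis using play_props(2)[OF gf su kz[unfolded zu_def]] kx(2)
      by (simp add: prof_def zu_def hx_def)
  qed
  have ay: "the ((y ! ky) p) = tu p hy"
  proof -
    have kz: "ky < length zd" using ky(1) prefix_length_le[OF zd_p] by simp
    have "y ! ky = zd ! ky" using prefix_nth[OF zd_p ky(1)] by simp
    moreover have "take ky zd = hy" using zd_p ky(1) by (auto elim!: prefixE simp: hy_def)
    ultimately have "the ((y ! ky) p) = td p hy" using play_props(2)[OF gf sd kz[unfolded zd_def]] ky(2)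
      by (simp add: prof_def zd_def hy_def)
    then show ?thesis using agree pN pd by simp
  qed
  have I12: "I1 \<noteq> I2"
  proof
    assume e: "I1 = I2"
    have "strategy G p (tu p)" using su pN by blast
    then have "tu p hx = tu p hy" using I1 I2 e unfolding strategy_def by blast
    then have "b = c" using e nx(2) ny(2) kx(4) ky(4) ax ay by (simp add: I1_def I2_def hx_def hy_def ex_def ey_def)
    then show False using dec(1) by simp
  qed
  have glx: "length g < kx"
  proof (rule ccontr)
    assume "\<not> length g < kx"
    have lgx: "Suc (length g) \<le> length x" using prefix_length_le[OF gx] by simp
    have tg: "take (Suc (length g)) x = g @ [\<alpha>]" using gx by (auto elim!: prefixE)
    have "strict_prefix hx (g @ [\<alpha>])"
      using take_strict_mono[of kx "Suc (length g)" x] \<open>\<not> length g < kx\<close> lgx tg by (simp add: hx_def)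
    then have "length (experience G p hx) < length e0" unfolding e0_def by (rule exp_strict) (use kx(2) in \<open>simp add: hx_def\<close>)
    then show False using lx ne0 by simp
  qed
  have gly: "length g < ky"
  proof (rule ccontr)
    assume "\<not> length g < ky"
    have lgy: "Suc (length g) \<le> length y" using prefix_length_le[OF gy] by simp
    have tg: "take (Suc (length g)) y = g @ [\<beta>]" using gy by (auto elim!: prefixE)
    have "strict_prefix hy (g @ [\<beta>])"
      using take_strict_mono[of ky "Suc (length g)" y] \<open>\<not> length g < ky\<close> lgy tg by (simp add: hy_def)
    then have "length (experience G p hy) < length e0" unfolding e0y[symmetric] by (rule exp_strict) (use ky(2) in \<open>simp add: hy_def\<close>)
    then show False using ly ne0 by simp
  qed
  have sx: "strict_prefix hx' hx"
  proof -
    have "kx' < kx"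
    proof (rule ccontr)
      assume "\<not> kx' < kx"
      then have "prefix hx hx'" using take_prefix_mono[of kx kx' x] by (simp add: hx_def hx'_def)
      then have "length (experience G p hx) \<le> length (experience G p hx')" by (rule prefix_length_le[OF exp_mono])
      then show False using lx lx' npos by simp
    qed
    then show ?thesis using take_strict_mono[of kx' kx x] kx(1) by (simp add: hx_def hx'_def)
  qed
  have sy: "strict_prefix hy' hy"
  proof -
    have "ky' < ky"
    proof (rule ccontr)
      assume "\<not> ky' < ky"
      then have "prefix hy hy'" using take_prefix_mono[of ky ky' y] by (simp add: hy_def hy'_def)
      then have "length (experience G p hy) \<le> length (experience G p hy')" by (rule prefix_length_le[OF exp_mono])
      then show False using ly ly' npos by simp
    qed
    then show ?thesis using take_strict_mono[of ky' ky y] ky(1) by (simp add: hy_def hy'_def)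
  qed
  have pr: "\<forall>I \<in> info G p. \<forall>h \<in> I. \<forall>h' \<in> I. experience G p h = experience G p h'"
    using gf_agent[OF gf pN] by (elim conjE) assumption
  have un: "\<Union> (info G p) = dec_nodes G p"
    using gf_agent[OF gf pN] by (elim conjE) assumption
  have imm: "immediate_succ G p K I" if I: "I \<in> info G p" "h \<in> I" "length (experience G p h) = n"
     "hK \<in> K" "strict_prefix hK h" for I h hK
  proof -
    have "info_prec K I" unfolding info_prec_def using I by blast
    moreover have "\<not> (\<exists>K' \<in> info G p. info_prec K K' \<and> info_prec K' I)"
    proof
      assume "\<exists>K' \<in> info G p. info_prec K K' \<and> info_prec K' I"
      then obtain K' h1 h1' h2' h2 where K': "K' \<in> info G p" "h1 \<in> K" "h1' \<in> K'" "strict_prefix h1 h1'"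
        "h2' \<in> K'" "h2 \<in> I" "strict_prefix h2' h2"
        unfolding info_prec_def by blast
      have "experience G p h1 = experience G p hx'" using pr K(1) K'(2) K(2) by blast
      then have l1: "length (experience G p h1) = n - 1" using lx' by simp
      have "h1 \<in> dec_nodes G p" using un K(1) K'(2) by blast
      then have "length (experience G p h1) < length (experience G p h1')"
        using exp_strict K'(4) by (auto simp: dec_nodes_def)
      moreover have "experience G p h1' = experience G p h2'" using pr K' by blast
      moreover have "h2' \<in> dec_nodes G p" using un K' by blast
      then have "length (experience G p h2') < length (experience G p h2)"
        using exp_strict K'(7) by (auto simp: dec_nodes_def)
      moreover have "experience G p h2 = experience G p h" using pr I K' by blast
      ultimately show False using l1 I(3) by simp
    qed
    ultimately show ?thesis unfolding immediate_succ_def by blast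
  qed
  have im1: "immediate_succ G p K I1" using imm[OF I1 lx K(2) sx] .
  have im2: "immediate_succ G p K I2" using imm[OF I2 ly Ky sy] .
  have tsi: "typeset_info Th p I = snd (last cs)" if I: "I \<in> info G p" "h \<in> I" "experience G p h = cs" for I h
  proof -
    define h0 where "h0 = (SOME h. h \<in> I)"
    have h0: "h0 \<in> I" unfolding h0_def using I(2) by (rule someI)
    have "h0 \<in> dec_nodes G p" using un I(1) h0 by blast
    then have h0h: "h0 \<in> hist G" by (simp add: dec_nodes_def nonterm_def)
    have "experience G p h0 = cs" using pr I h0 by blast
    moreover have "cs \<noteq> []" using npos n_def by auto
    ultimately show ?thesis unfolding typeset_info_def h0_def[symmetric]
      using ts_exp[OF gf h0h, of Th p] by simp
  qed
  have teq: "typeset_info Th p I1 = typeset_info Th p I2"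
    using tsi[OF I1 exx] tsi[OF I2 exy] by simp
  have sN: "\<forall>k \<in> N - {p, d}. strategy G k (tu k)" using su by blast
  have c1: "consistent N G (N - {p, d}) tu hx"
    unfolding consistent_def
  proof (intro exI[of _ tu] conjI)
    show "\<forall>i\<in>N. strategy G i (tu i)" using su .
    show "\<forall>i\<in>N - {p, d}. tu i = tu i" by simp
    show "prefix hx (play G tu)" using zu_p unfolding zu_def hx_def
      using take_is_prefix prefix_order.trans by blast
  qed
  have c2: "consistent N G (N - {p, d}) tu hy"
    unfolding consistent_def
  proof (intro exI[of _ td] conjI)
    show "\<forall>i\<in>N. strategy G i (td i)" using sd .
    show "\<forall>i\<in>N - {p, d}. td i = tu i" using agree by blast
    show "prefix hy (play G td)" using zd_p unfolding zd_def hy_def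
      using take_is_prefix prefix_order.trans by blast
  qed
  have "indiff N Th R f d hx \<or> indiff N Th R f d hy"
    by (rule irp_apply[OF irp pN dN pd K(1) I1(1) I2(1) I12 im1 im2 teq I1(2) I2(2) sN c1 c2])
  then show False using minx miny glx gly kx(1) ky(1) by (auto simp: hx_def hy_def)
qed


lemma tp_mono:
  assumes gm: "gradual_mech N Th f G" and h: "h \<in> hist G" and pg: "prefix g h"
  shows "typeprofs_at N Th h \<subseteq> typeprofs_at N Th g"
  unfolding typeprofs_at_def by (rule PiE_mono) (use ts_mono[OF gm h _ pg] in blast)

lemma tp_ne:
  assumes gm: "gradual_mech N Th f G" and h: "h \<in> hist G"
  shows "typeprofs_at N Th h \<noteq> {}"
  unfolding typeprofs_at_def PiE_eq_empty_iff using ts_sub[OF gm h] by blast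

lemma tp_sub:
  assumes gm: "gradual_mech N Th f G" and h: "h \<in> hist G"
  shows "typeprofs_at N Th h \<subseteq> PiE N Th"
  unfolding typeprofs_at_def by (rule PiE_mono) (use ts_sub[OF gm h] in blast)

theorem theorem3:
  fixes N :: "'i set" and X :: "'x set" and Th :: "'i \<Rightarrow> 'th set"
    and R :: "'i \<Rightarrow> 'th \<Rightarrow> 'x \<Rightarrow> 'x \<Rightarrow> bool"
    and f :: "('i \<Rightarrow> 'th) \<Rightarrow> 'x" and G :: "('i, 'th set, 'x) game"
  assumes "finite N" and "finite X" and "\<And>i. i \<in> N \<Longrightarrow> finite (Th i)"
    and "\<And>i t. i \<in> N \<Longrightarrow> t \<in> Th i \<Longrightarrow> complete_transitive_on X (R i t)"
    and "f ` (PiE N Th) \<subseteq> X"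
    and "outc G ` terminal G \<subseteq> X"
    and "strategy_proof N Th R f"
    and "gradual_mech N Th f G"
    and "indiff_reaction_proof N Th R f G"
  shows "incentive_compatible N Th R G"
  unfolding incentive_compatible_def
proof (intro ballI allI impI)
  fix d \<theta> \<sigma>u \<sigma> s
  assume dN: "d \<in> N" and th: "\<theta> \<in> Th d"
    and A: "strategy G d \<sigma>u \<and> unconditional Th G d \<theta> \<sigma>u \<and> strategy G d \<sigma> \<and>
        (\<forall>k\<in>N - {d}. strategy G k (s k))"
  note gm = assms(8) and irp = assms(9)
  have gf: "game_form N G" using gm_parts(1)[OF gm] .
  define tu where "tu = s(d := \<sigma>u)"
  define td where "td = s(d := \<sigma>)"
  have su: "\<forall>j\<in>N. strategy G j (tu j)" using A by (auto simp: tu_def)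
  have sd: "\<forall>j\<in>N. strategy G j (td j)" using A by (auto simp: td_def)
  have agree: "\<forall>j\<in>N. j \<noteq> d \<longrightarrow> td j = tu j" by (simp add: tu_def td_def)
  have unc: "unconditional Th G d \<theta> (tu d)" using A by (simp add: tu_def)
  define zu where "zu = play G tu"
  define zd where "zd = play G td"
  have zut: "zu \<in> terminal G" using play_props(1)[OF gf su] by (simp add: zu_def)
  have zdt: "zd \<in> terminal G" using play_props(1)[OF gf sd] by (simp add: zd_def)
  have zuh: "zu \<in> hist G" using zut by (simp add: terminal_def)
  have zdh: "zd \<in> hist G" using zdt by (simp add: terminal_def)
  have RR: "complete_transitive_on X (R d \<theta>)" using assms(4)[OF dN th] .
  have refl: "\<And>a. a \<in> X \<Longrightarrow> R d \<theta> a a" using RR unfolding complete_transitive_on_def by blast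
  have trans: "\<And>a b c. a \<in> X \<Longrightarrow> b \<in> X \<Longrightarrow> c \<in> X \<Longrightarrow> R d \<theta> a b \<Longrightarrow> R d \<theta> b c \<Longrightarrow> R d \<theta> a c"
    using RR unfolding complete_transitive_on_def by blast
  have ouX: "outc G zu \<in> X" using assms(6) zut by blast
  have odX: "outc G zd \<in> X" using assms(6) zdt by blast
  have goal: "R d \<theta> (outc G zu) (outc G zd)"
  proof (cases "zu = zd")
    case True then show ?thesis using refl ouX by simp
  next
    case False
    have term_np: "\<not> prefix a b" if "a \<in> terminal G" "b \<in> hist G" "a \<noteq> b" for a b
    proof
      assume "prefix a b"
      then have "strict_prefix a b" using that(3) by (simp add: strict_prefix_def)
      then obtain z zs where "b = a @ z # zs" by (rule strict_prefixE')
      then have "prefix (a @ [z]) b" by (simp add: prefixI)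
      then have "a @ [z] \<in> hist G" using gf_prefix[OF gf that(2)] by blast
      then have "a \<in> nonterm G" using gf_snoc[OF gf] by blast
      then show False using that(1) by (simp add: terminal_def)
    qed
    have "\<not> prefix zu zd" using term_np[OF zut zdh False] .
    moreover have "\<not> prefix zd zu" using term_np[OF zdt zuh] False by metis
    ultimately obtain g \<alpha> bs \<beta> cs where dec: "\<alpha> \<noteq> \<beta>" "zu = g @ \<alpha> # bs" "zd = g @ \<beta> # cs"
      using parallel_decomp[of zu zd] by blast
    have lgu: "length g < length zu" and lgd: "length g < length zd" using dec by auto
    have \<alpha>: "\<alpha> = prof G tu g"
      using play_props(2)[OF gf su, of "length g"] lgu dec(2) by (simp add: zu_def nth_append)
    have \<beta>: "\<beta> = prof G td g"
      using play_props(2)[OF gf sd, of "length g"] lgd dec(3) by (simp add: zd_def nth_append)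
    have ab: "\<alpha> p = \<beta> p" if "p \<in> N" "p \<noteq> d" for p
      using that agree \<alpha> \<beta> by (simp add: prof_def)
    define Pu where "Pu = (\<lambda>m. length g < m \<and> m \<le> length zu \<and> (m = length zu \<or> indiff N Th R f d (take m zu)))"
    define Pd where "Pd = (\<lambda>m. length g < m \<and> m \<le> length zd \<and> (m = length zd \<or> indiff N Th R f d (take m zd)))"
    define ma where "ma = (LEAST m. Pu m)"
    define md where "md = (LEAST m. Pd m)"
    have Pma: "Pu ma" unfolding ma_def by (rule LeastI[of _ "length zu"]) (use lgu in \<open>simp add: Pu_def\<close>)
    have Pmd: "Pd md" unfolding md_def by (rule LeastI[of _ "length zd"]) (use lgd in \<open>simp add: Pd_def\<close>)
    have nPu: "\<not> Pu k" if "k < ma" for k using not_less_Least[of k Pu] that ma_def by blast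
    have nPd: "\<not> Pd k" if "k < md" for k using not_less_Least[of k Pd] that md_def by blast
    define x where "x = take ma zu"
    define y where "y = take md zd"
    have lx: "length x = ma" using Pma by (simp add: Pu_def x_def)
    have ly: "length y = md" using Pmd by (simp add: Pd_def y_def)
    have xp: "prefix x (play G tu)" unfolding x_def zu_def by (rule take_is_prefix)
    have yp: "prefix y (play G td)" unfolding y_def zd_def by (rule take_is_prefix)
    have gx: "prefix (g @ [\<alpha>]) x"
    proof -
      have "take (Suc (length g)) zu = g @ [\<alpha>]" using dec(2) by simp
      moreover have "prefix (take (Suc (length g)) zu) (take ma zu)"
        by (rule take_prefix_mono) (use Pma in \<open>simp add: Pu_def\<close>)
      ultimately show ?thesis by (simp add: x_def)
    qed
    have gy: "prefix (g @ [\<beta>]) y"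
    proof -
      have "take (Suc (length g)) zd = g @ [\<beta>]" using dec(3) by simp
      moreover have "prefix (take (Suc (length g)) zd) (take md zd)"
        by (rule take_prefix_mono) (use Pmd in \<open>simp add: Pd_def\<close>)
      ultimately show ?thesis by (simp add: y_def)
    qed
    have minx: "\<forall>k. length g < k \<longrightarrow> k < length x \<longrightarrow> \<not> indiff N Th R f d (take k x)"
    proof (intro allI impI)
      fix k assume k: "length g < k" "k < length x"
      then have "\<not> Pu k" using nPu lx by simp
      moreover have "k \<le> length zu" "k \<noteq> length zu" using k lx Pma by (auto simp: Pu_def)
      ultimately show "\<not> indiff N Th R f d (take k x)" using k lx by (simp add: Pu_def x_def)
    qed
    have miny: "\<forall>k. length g < k \<longrightarrow> k < length y \<longrightarrow> \<not> indiff N Th R f d (take k y)"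
    proof (intro allI impI)
      fix k assume k: "length g < k" "k < length y"
      then have "\<not> Pd k" using nPd ly by simp
      moreover have "k \<le> length zd" "k \<noteq> length zd" using k ly Pmd by (auto simp: Pd_def)
      ultimately show "\<not> indiff N Th R f d (take k y)" using k ly by (simp add: Pd_def y_def)
    qed
    have inter: "typeset_at Th p x \<inter> typeset_at Th p y \<noteq> {}" if "p \<in> N" "p \<noteq> d" for p
      by (rule key[OF gm irp dN that(1) that(2) su sd agree xp yp gx gy ab[OF that] minx miny])
    have xh: "x \<in> hist G" using gf_prefix[OF gf zuh] by (simp add: x_def take_is_prefix)
    have yh: "y \<in> hist G" using gf_prefix[OF gf zdh] by (simp add: y_def take_is_prefix)
    have thx: "\<theta> \<in> typeset_at Th d x"
      using uncond_play[OF gm su dN th unc] ts_mono[OF gm zuh dN take_is_prefix, of ma]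
      unfolding zu_def x_def by blast
    obtain \<theta>'' where t2: "\<theta>'' \<in> typeset_at Th d zd" using ts_sub[OF gm zdh dN] by blast
    have t2y: "\<theta>'' \<in> typeset_at Th d y" using t2 ts_mono[OF gm zdh dN take_is_prefix, of md]
      unfolding y_def by blast
    have t2T: "\<theta>'' \<in> Th d" using t2 ts_sub[OF gm zdh dN] by blast
    define \<theta>x where "\<theta>x = restrict (\<lambda>q. if q = d then \<theta> else (SOME v. v \<in> typeset_at Th q x \<inter> typeset_at Th q y)) N"
    define \<theta>y where "\<theta>y = \<theta>x(d := \<theta>'')"
    have sm: "(SOME v. v \<in> typeset_at Th q x \<inter> typeset_at Th q y) \<in> typeset_at Th q x \<inter> typeset_at Th q y"
      if "q \<in> N" "q \<noteq> d" for q
      using inter[OF that] some_in_eq[of "typeset_at Th q x \<inter> typeset_at Th q y"] by blast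
    have \<theta>xin: "\<theta>x \<in> typeprofs_at N Th x"
      unfolding typeprofs_at_def \<theta>x_def using thx sm by (auto simp: PiE_iff)
    have \<theta>yin: "\<theta>y \<in> typeprofs_at N Th y"
      unfolding typeprofs_at_def \<theta>y_def \<theta>x_def using t2y sm dN by (auto simp: PiE_iff extensional_def)
    have \<theta>xP: "\<theta>x \<in> PiE N Th" using \<theta>xin tp_sub[OF gm xh] by blast
    have \<theta>yP: "\<theta>y \<in> PiE N Th" using \<theta>yin tp_sub[OF gm yh] by blast
    have fxX: "f \<theta>x \<in> X" using \<theta>xP assms(5) by blast
    have fyX: "f \<theta>y \<in> X" using \<theta>yP assms(5) by blast
    have "\<theta>x d = \<theta>" using dN by (simp add: \<theta>x_def)
    then have sp: "R d \<theta> (f \<theta>x) (f \<theta>y)"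
      using assms(7) dN \<theta>xP t2T unfolding strategy_proof_def \<theta>y_def by metis
    have r1: "R d \<theta> (outc G zu) (f \<theta>x)"
    proof (cases "ma = length zu")
      case True
      then have "x = zu" by (simp add: x_def)
      then have "outc G zu = f \<theta>x" using gm_parts(4)[OF gm zut] \<theta>xin by simp
      then show ?thesis using refl ouX by simp
    next
      case False
      then have ind: "indiff N Th R f d x" using Pma by (simp add: Pu_def x_def)
      obtain \<theta>u where tu': "\<theta>u \<in> typeprofs_at N Th zu" using tp_ne[OF gm zuh] by blast
      then have "\<theta>u \<in> typeprofs_at N Th x" using tp_mono[OF gm zuh take_is_prefix, of ma] unfolding x_def by blast
      then have "R d \<theta> (f \<theta>u) (f \<theta>x)" using ind \<theta>xin th unfolding indiff_def by blast
      then show ?thesis using gm_parts(4)[OF gm zut tu'] by simp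
    qed
    have r2: "R d \<theta> (f \<theta>y) (outc G zd)"
    proof (cases "md = length zd")
      case True
      then have "y = zd" by (simp add: y_def)
      then have "outc G zd = f \<theta>y" using gm_parts(4)[OF gm zdt] \<theta>yin by simp
      then show ?thesis using refl odX by simp
    next
      case False
      then have ind: "indiff N Th R f d y" using Pmd by (simp add: Pd_def y_def)
      obtain \<theta>d where td': "\<theta>d \<in> typeprofs_at N Th zd" using tp_ne[OF gm zdh] by blast
      then have "\<theta>d \<in> typeprofs_at N Th y" using tp_mono[OF gm zdh take_is_prefix, of md] unfolding y_def by blast
      then have "R d \<theta> (f \<theta>y) (f \<theta>d)" using ind \<theta>yin th unfolding indiff_def by blast
      then show ?thesis using gm_parts(4)[OF gm zdt td'] by simp
    qed
    have "R d \<theta> (outc G zu) (f \<theta>y)" by (rule trans[OF ouX fxX fyX r1 sp])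
    then show ?thesis by (rule trans[OF ouX fyX odX _ r2])
  qed
  then show "R d \<theta> (outcome G (s(d := \<sigma>u))) (outcome G (s(d := \<sigma>)))"
    by (simp add: outcome_def zu_def zd_def tu_def td_def)
qed

end
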